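(* Let $a_0,a_1,a_2,a_3\in\mathbb{R}$ and consider the binary quartic form $$f(x,y)=-x^4+a_3x^3y+a_2x^2y^2+a_1xy^3+a_0y^4 .$$ Let $$b_0=\tfrac14\,(-a_1^2-a_1a_2a_3+a_0a_3^2),\quad b_1=-\tfrac14\,(4a_0+a_2^2+a_1a_3),\quad b_2=-\tfrac{a_2}{2},\quad \lambda_0=\frac{4b_2+2\sqrt{3b_1+4b_2^2}}{3}.$$ Then $f$ is negative semi-definite if and only if $\lambda_0$ is real and $$\lambda_0\ge \frac{a_3^2}{4},\qquad -\tfrac14\lambda_0^3+b_2\lambda_0^2+b_1\lambda_0+b_0\ge 0 .$$ Moreover, $f$ is negative definite if and only if $\lambda_0$ is real and $$\lambda_0> \frac{a_3^2}{4},\qquad -\tfrac14\lambda_0^3+b_2\lambda_0^2+b_1\lambda_0+b_0> 0 .$$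
   Context: A binary form $f(x,y)$ with real coefficients is negative definite (resp. negative semi-definite) if $f(x,y)<0$ (resp. $f(x,y)\le 0$) for all real $x,y$ not both zero. The quantity $\lambda_0$ is real exactly when $3b_1+4b_2^2\ge 0$. *)

theory Defs
  imports Complex_Main
begin

definition neg_definite :: "(real \<Rightarrow> real \<Rightarrow> real) \<Rightarrow> bool" where
  "neg_definite f \<longleftrightarrow> (\<forall>x y. (x, y) \<noteq> (0, 0) \<longrightarrow> f x y < 0)"

definition neg_semidefinite :: "(real \<Rightarrow> real \<Rightarrow> real) \<Rightarrow> bool" where
  "neg_semidefinite f \<longleftrightarrow> (\<forall>x y. (x, y) \<noteq> (0, 0) \<longrightarrow> f x y \<le> 0)"

end

theory Submission
  imports Defs
begin


lemma key_id:
  fixes a0 a1 a2 a3 m x :: real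
  shows "-(x^4) + a3*x^3 + a2*x^2 + a1*x + a0 =
    -((x^2 - a3/2*x - a2/2 - m/2)^2) + ((a3^2/4 - m)*x^2 + (a1 + a3*a2/2 + a3*m/2)*x + (a0 + (a2/2 + m/2)^2))"
  by (simp add: field_simps power2_eq_square power3_eq_cube power4_eq_xxxx)

lemma disc_id:
  fixes a0 a1 a2 a3 m :: real
  shows "4*(a3^2/4 - m)*(a0 + (a2/2 + m/2)^2) - (a1 + a3*a2/2 + a3*m/2)^2 =
     4*(- ((1/4) * m^3) + (- (a2 / 2)) * m^2 + (- (1/4) * (4 * a0 + a2^2 + a1 * a3)) * m + (1/4) * (- (a1^2) - a1 * a2 * a3 + a0 * a3^2))"
  by (simp add: field_simps power2_eq_square power3_eq_cube)

lemma deriv_id: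
  fixes a0 a1 a2 a3 m :: real
  shows "-(3/4)*m^2 + 2*(- (a2 / 2))*m + (- (1/4) * (4 * a0 + a2^2 + a1 * a3)) =
    -(a0 + (a2/2 + m/2)^2) - (a3^2/4 - m)*(-a2/2 - m/2) - (a1 + a3*a2/2 + a3*m/2)*a3/4"
  by (simp add: field_simps power2_eq_square power3_eq_cube)




definition HH :: "real \<Rightarrow> real \<Rightarrow> real \<Rightarrow> real \<Rightarrow> real" where
  "HH b0 b1 b2 m = - ((1/4) * m^3) + b2 * m^2 + b1 * m + b0"

lemma F1:
  fixes S b0 b1 b2 m :: real
  assumes "S^2 = 3*b1 + 4*b2^2"
  shows "HH b0 b1 b2 ((4*b2 + 2*S)/3) - HH b0 b1 b2 m = 1/4 * (m - (4*b2 + 2*S)/3)^2 * (m - (4*b2 - 4*S)/3)"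
proof -
  have b1: "b1 = (S^2 - 4*b2^2)/3" using assms by simp
  show ?thesis unfolding HH_def b1 by (simp add: field_simps power2_eq_square power3_eq_cube)
qed

lemma F2:
  fixes S b1 b2 m :: real
  assumes "S^2 = 3*b1 + 4*b2^2"
  shows "-(3/4)*m^2 + 2*b2*m + b1 = -(3/4) * (m - (4*b2 + 2*S)/3) * (m - (4*b2 - 2*S)/3)"
proof -
  have b1: "b1 = (S^2 - 4*b2^2)/3" using assms by simp
  show ?thesis unfolding b1 by (simp add: field_simps power2_eq_square power3_eq_cube)
qed

lemma F3:
  fixes b0 b1 b2 u w :: real
  shows "HH b0 b1 b2 w - HH b0 b1 b2 u = (w - u) * ((3*b1 + 4*b2^2)/3 - 1/4 * ((u - 4*b2/3)^2 + (u - 4*b2/3)*(w - 4*b2/3) + (w - 4*b2/3)^2))"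
  unfolding HH_def by (simp add: field_simps power2_eq_square power3_eq_cube)

lemma F4:
  fixes m b1 b2 :: real
  shows "-(3/4)*m^2 + 2*b2*m + b1 = (3*b1 + 4*b2^2)/3 - 3/4 * (m - 4*b2/3)^2"
  by (simp add: field_simps power2_eq_square)

lemma quad_pos: "(u::real)^2 + u*w + w^2 \<ge> 0"
proof -
  have "u^2 + u*w + w^2 = (u + w/2)^2 + 3/4*w^2" by (simp add: field_simps power2_eq_square)
  also have "\<dots> \<ge> 0" by simp
  finally show ?thesis .
qed

lemma quad_big:
  fixes u w c :: real
  assumes "c \<ge> 0" "u \<ge> c" "w > c"
  shows "u^2 + u*w + w^2 > 3*c^2"
proof -
  have "u^2 \<ge> c^2" using assms by (simp add: power_mono)
  moreover have "u*w \<ge> c*c" using assms by (meson less_imp_le mult_mono order_trans)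
  moreover have "w^2 > c^2" using assms by (simp add: power_strict_mono)
  ultimately show ?thesis by (simp add: power2_eq_square)
qed

lemma quad_big2:
  fixes u w c :: real
  assumes "c \<ge> 0" "u < -c" "w < -c"
  shows "u^2 + u*w + w^2 > 3*c^2"
  using quad_big[of c "-w" "-u"] assms by (simp add: power2_eq_square algebra_simps)




lemma quartic_bound:
  fixes a1 a2 a3 x :: real
  assumes "\<bar>x\<bar> \<ge> 1 + \<bar>a1\<bar> + \<bar>a2\<bar> + \<bar>a3\<bar>"
  shows "a3*x^3 + a2*x^2 + a1*x \<le> x^4"
proof -
  define t where "t = \<bar>x\<bar>"
  have t1: "t \<ge> 1" using assms t_def by linarith
  have t2: "t^2 \<le> t^3" using t1 by (simp add: power_increasing)
  have t3: "t \<le> t^3" using t1 power_increasing[of 1 3 t] by simp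
  have e1: "a3*x^3 \<le> \<bar>a3\<bar>*t^3" unfolding t_def by (metis abs_ge_self abs_mult power_abs)
  have e2: "a2*x^2 \<le> \<bar>a2\<bar>*t^3"
  proof -
    have "a2*x^2 \<le> \<bar>a2\<bar>*t^2" unfolding t_def by (metis abs_ge_self abs_mult power_abs)
    also have "\<dots> \<le> \<bar>a2\<bar>*t^3" using t2 by (simp add: mult_left_mono)
    finally show ?thesis .
  qed
  have e3: "a1*x \<le> \<bar>a1\<bar>*t^3"
  proof -
    have "a1*x \<le> \<bar>a1\<bar>*t" unfolding t_def by (metis abs_ge_self abs_mult)
    also have "\<dots> \<le> \<bar>a1\<bar>*t^3" using t3 by (simp add: mult_left_mono)
    finally show ?thesis .
  qed
  have "(\<bar>a1\<bar> + \<bar>a2\<bar> + \<bar>a3\<bar>) * t^3 \<le> t * t^3"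
    using assms t_def by (intro mult_right_mono) auto
  moreover have "t * t^3 = x^4" unfolding t_def
    by (simp add: power4_eq_xxxx power3_eq_cube power_abs[symmetric] abs_mult[symmetric])
  ultimately show ?thesis using e1 e2 e3 by (simp add: algebra_simps)
qed



lemma quartic_max:
  fixes a0 a1 a2 a3 :: real
  shows "\<exists>x0. \<forall>x. -(x^4) + a3*x^3 + a2*x^2 + a1*x + a0 \<le> -(x0^4) + a3*x0^3 + a2*x0^2 + a1*x0 + a0"
proof -
  define G where "G = (\<lambda>x::real. -(x^4) + a3*x^3 + a2*x^2 + a1*x + a0)"
  define R where "R = 1 + \<bar>a1\<bar> + \<bar>a2\<bar> + \<bar>a3\<bar>"
  have "continuous_on {-R..R} G" unfolding G_def by (intro continuous_intros)
  then obtain x0 where x0: "x0 \<in> {-R..R}" and mx: "\<forall>y\<in>{-R..R}. G y \<le> G x0"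
    using continuous_attains_sup[of "{-R..R}" G] R_def by (auto simp: compact_Icc)
  have "0 \<in> {-R..R}" using R_def by auto
  then have g0: "G 0 \<le> G x0" using mx by blast
  have "G x \<le> G x0" for x
  proof (cases "x \<in> {-R..R}")
    case True then show ?thesis using mx by blast
  next
    case False
    then have "\<bar>x\<bar> \<ge> R" by auto
    then have "a3*x^3 + a2*x^2 + a1*x \<le> x^4" using quartic_bound R_def by blast
    then have "G x \<le> G 0" unfolding G_def by simp
    then show ?thesis using g0 by linarith
  qed
  then show ?thesis unfolding G_def by blast
qed




lemma quartic_max_deriv:
  fixes a0 a1 a2 a3 x0 :: real
  assumes "\<forall>x. -(x^4) + a3*x^3 + a2*x^2 + a1*x + a0 \<le> -(x0^4) + a3*x0^3 + a2*x0^2 + a1*x0 + a0"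
  shows "-4*x0^3 + 3*a3*x0^2 + 2*a2*x0 + a1 = 0"
proof -
  have "DERIV (\<lambda>x. -(x^4) + a3*x^3 + a2*x^2 + a1*x + a0) x0 :> (-4*x0^3 + 3*a3*x0^2 + 2*a2*x0 + a1)"
    by (auto intro!: derivative_eq_intros simp: power2_eq_square power3_eq_cube algebra_simps)
  from DERIV_local_max[OF this zero_less_one] assms show ?thesis by simp
qed




lemma factor_id:
  fixes a0 a1 a2 a3 x0 x :: real
  assumes "-4*x0^3 + 3*a3*x0^2 + 2*a2*x0 + a1 = 0"
  shows "(-(x^4) + a3*x^3 + a2*x^2 + a1*x + a0) - (-(x0^4) + a3*x0^3 + a2*x0^2 + a1*x0 + a0)
     = -((x-x0)^2 * ((x + (x0 - a3/2))^2 + (2*x0^2 - a3*x0 - a2 - a3^2/4)))"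
proof -
  have a1: "a1 = 4*x0^3 - 3*a3*x0^2 - 2*a2*x0" using assms by simp
  show ?thesis unfolding a1 by (simp add: field_simps power2_eq_square power3_eq_cube power4_eq_xxxx)
qed

lemma coeff_id:
  fixes a0 a1 a2 a3 x0 M :: real
  assumes "-4*x0^3 + 3*a3*x0^2 + 2*a2*x0 + a1 = 0"
    and "M = -(x0^4) + a3*x0^3 + a2*x0^2 + a1*x0 + a0"
  shows "a1 + a3*a2/2 + a3*(2*x0^2 - a3*x0 - a2)/2 = 2*(2*x0^2 - a3*x0 - a2 - a3^2/4)*x0"
    and "a0 + (a2/2 + (2*x0^2 - a3*x0 - a2)/2)^2 = M - (2*x0^2 - a3*x0 - a2 - a3^2/4)*x0^2"
proof -
  have a1: "a1 = 4*x0^3 - 3*a3*x0^2 - 2*a2*x0" using assms by simp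
  have a0: "a0 = M + x0^4 - a3*x0^3 - a2*x0^2 - a1*x0" using assms by simp
  show "a1 + a3*a2/2 + a3*(2*x0^2 - a3*x0 - a2)/2 = 2*(2*x0^2 - a3*x0 - a2 - a3^2/4)*x0"
    unfolding a1 by (simp add: field_simps power2_eq_square power3_eq_cube)
  show "a0 + (a2/2 + (2*x0^2 - a3*x0 - a2)/2)^2 = M - (2*x0^2 - a3*x0 - a2 - a3^2/4)*x0^2"
    unfolding a0 a1 by (simp add: field_simps power2_eq_square power3_eq_cube power4_eq_xxxx)
qed





lemma cubic_nec:
  fixes mA ms b0 b1 b2 :: real
  assumes mu: "mA < ms" and hA: "HH b0 b1 b2 mA \<le> 0" and hs: "HH b0 b1 b2 ms \<ge> 0"
  shows "3*b1 + 4*b2^2 \<ge> 0 \<and> mA < (4*b2 + 2*sqrt (3*b1 + 4*b2^2))/3 \<and>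
         HH b0 b1 b2 ((4*b2 + 2*sqrt (3*b1 + 4*b2^2))/3) \<ge> HH b0 b1 b2 ms"
proof -
  define D where "D = 3*b1 + 4*b2^2"
  define u where "u = mA - 4*b2/3"
  define w where "w = ms - 4*b2/3"
  define X where "X = u^2 + u*w + w^2"
  define Q where "Q = D/3 - 1/4 * X"
  have "HH b0 b1 b2 ms - HH b0 b1 b2 mA = (ms - mA) * Q"
    using F3[of b0 b1 b2 ms mA] unfolding Q_def D_def u_def w_def X_def by simp
  moreover have "HH b0 b1 b2 ms - HH b0 b1 b2 mA \<ge> 0" using hA hs by simp
  moreover have "ms - mA > 0" using mu by simp
  ultimately have Q: "Q \<ge> 0" by (metis zero_le_mult_iff not_le)
  have X0: "X \<ge> 0" unfolding X_def by (rule quad_pos)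
  have D: "D \<ge> 0" using Q X0 unfolding Q_def by linarith
  define S where "S = sqrt D"
  have S0: "S \<ge> 0" and SD: "S^2 = D" using D by (auto simp: S_def)
  have l0: "mA < (4*b2 + 2*S)/3"
  proof (rule ccontr)
    assume "\<not> ?thesis"
    then have "u \<ge> 2*S/3" "w > 2*S/3" using mu unfolding u_def w_def by auto
    then have "X > 3*(2*S/3)^2" using quad_big[of "2*S/3" u w] S0 unfolding X_def by linarith
    moreover have "3*(2*S/3)^2 = 4*D/3" using SD by (simp add: power2_eq_square)
    ultimately have "Q < 0" unfolding Q_def by linarith
    then show False using Q by linarith
  qed
  have rho: "ms \<ge> (4*b2 - 4*S)/3"
  proof (rule ccontr)
    assume "\<not> ?thesis"
    then have "u < -(4*S/3)" "w < -(4*S/3)" using mu unfolding u_def w_def by auto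
    then have "X > 3*(4*S/3)^2" using quad_big2[of "4*S/3" u w] S0 unfolding X_def by linarith
    moreover have "3*(4*S/3)^2 = 16*D/3" using SD by (simp add: power2_eq_square)
    ultimately have "Q < 0" using D unfolding Q_def by linarith
    then show False using Q by linarith
  qed
  have "1/4 * (ms - (4*b2 + 2*S)/3)^2 * (ms - (4*b2 - 4*S)/3) \<ge> 0"
    using rho by simp
  then have "HH b0 b1 b2 ((4*b2 + 2*S)/3) - HH b0 b1 b2 ms \<ge> 0"
    using F1[OF SD[unfolded D_def], of b0 ms] by linarith
  then show ?thesis using D l0 unfolding S_def D_def by linarith
qed




lemma sq_bound:
  fixes u D :: real
  assumes "D \<ge> 9/4 * u^2"
  shows "3/2*\<bar>u\<bar> \<le> sqrt D"
proof -
  have "sqrt ((3/2*u)^2) \<le> sqrt D" using assms by (intro real_sqrt_le_mono) (simp add: power2_eq_square)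
  then show ?thesis by (simp add: real_sqrt_abs abs_mult)
qed

lemma sq_bound_s:
  fixes u D :: real
  assumes "D > 9/4 * u^2"
  shows "3/2*\<bar>u\<bar> < sqrt D"
proof -
  have "sqrt ((3/2*u)^2) < sqrt D" using assms by (subst real_sqrt_less_iff) (simp add: power2_eq_square)
  then show ?thesis by (simp add: real_sqrt_abs abs_mult)
qed

lemma cubic_nec2:
  fixes mA b0 b1 b2 :: real
  assumes hp: "-(3/4)*mA^2 + 2*b2*mA + b1 \<ge> 0"
  shows "3*b1 + 4*b2^2 \<ge> 0 \<and> mA \<le> (4*b2 + 2*sqrt (3*b1 + 4*b2^2))/3 \<and>
         HH b0 b1 b2 ((4*b2 + 2*sqrt (3*b1 + 4*b2^2))/3) \<ge> HH b0 b1 b2 mA"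
proof -
  define D where "D = 3*b1 + 4*b2^2"
  define u where "u = mA - 4*b2/3"
  have h: "D \<ge> 9/4 * u^2" using hp F4[of mA b2 b1] unfolding D_def u_def by simp
  have "9/4 * u^2 \<ge> 0" by simp
  then have D: "D \<ge> 0" using h by linarith
  define S where "S = sqrt D"
  have S0: "S \<ge> 0" and SD: "S^2 = D" using D by (auto simp: S_def)
  have "3/2*\<bar>u\<bar> \<le> S" using sq_bound[OF h] unfolding S_def .
  then have u1: "u \<le> 2*S/3" and u2: "u \<ge> -2*S/3" by auto
  have "1/4 * (mA - (4*b2 + 2*S)/3)^2 * (mA - (4*b2 - 4*S)/3) \<ge> 0"
    using u2 S0 unfolding u_def by simp
  then have "HH b0 b1 b2 ((4*b2 + 2*S)/3) - HH b0 b1 b2 mA \<ge> 0"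
    using F1[OF SD[unfolded D_def], of b0 mA] by linarith
  then show ?thesis using D u1 unfolding S_def D_def u_def by simp
qed

lemma cubic_nec2s:
  fixes mA b0 b1 b2 :: real
  assumes hp: "-(3/4)*mA^2 + 2*b2*mA + b1 > 0"
  shows "3*b1 + 4*b2^2 \<ge> 0 \<and> mA < (4*b2 + 2*sqrt (3*b1 + 4*b2^2))/3 \<and>
         HH b0 b1 b2 ((4*b2 + 2*sqrt (3*b1 + 4*b2^2))/3) > HH b0 b1 b2 mA"
proof -
  define D where "D = 3*b1 + 4*b2^2"
  define u where "u = mA - 4*b2/3"
  have h: "D > 9/4 * u^2" using hp F4[of mA b2 b1] unfolding D_def u_def by simp
  have "9/4 * u^2 \<ge> 0" by simp
  then have D: "D \<ge> 0" using h by linarith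
  define S where "S = sqrt D"
  have S0: "S \<ge> 0" and SD: "S^2 = D" using D by (auto simp: S_def)
  have "3/2*\<bar>u\<bar> < S" using sq_bound_s[OF h] unfolding S_def .
  then have u1: "u < 2*S/3" and u2: "u > -2*S/3" by auto
  have "mA - (4*b2 + 2*S)/3 \<noteq> 0" using u1 unfolding u_def by simp
  then have "1/4 * (mA - (4*b2 + 2*S)/3)^2 * (mA - (4*b2 - 4*S)/3) > 0"
    using u2 S0 unfolding u_def by (intro mult_pos_pos) auto
  then have "HH b0 b1 b2 ((4*b2 + 2*S)/3) - HH b0 b1 b2 mA > 0"
    using F1[OF SD[unfolded D_def], of b0 mA] by linarith
  then show ?thesis using D u1 unfolding S_def D_def u_def by simp
qed




lemma R_nonpos:
  fixes A B C H x :: real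
  assumes "4*A*C - B^2 = 4*H" "A < 0" "H \<ge> 0"
  shows "A*x^2 + B*x + C \<le> 0"
proof -
  have "4*A*(A*x^2 + B*x + C) = (2*A*x + B)^2 + (4*A*C - B^2)" by (simp add: algebra_simps power2_eq_square)
  also have "\<dots> \<ge> 0" using assms by simp
  finally have "4*A*(A*x^2 + B*x + C) \<ge> 0" .
  then show ?thesis using assms(2) by (simp add: zero_le_mult_iff)
qed

lemma R_neg:
  fixes A B C H x :: real
  assumes "4*A*C - B^2 = 4*H" "A < 0" "H > 0"
  shows "A*x^2 + B*x + C < 0"
proof -
  have "4*A*(A*x^2 + B*x + C) = (2*A*x + B)^2 + (4*A*C - B^2)" by (simp add: algebra_simps power2_eq_square)
  also have "\<dots> > 0" using assms by (simp add: add_nonneg_pos)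
  finally have "4*A*(A*x^2 + B*x + C) > 0" .
  then show ?thesis using assms(2) by (simp add: zero_less_mult_iff)
qed

lemma suff:
  fixes a0 a1 a2 a3 b0 b1 b2 l0 :: real
  assumes b0_def: "b0 = (1/4) * (- (a1^2) - a1 * a2 * a3 + a0 * a3^2)"
    and b1_def: "b1 = - (1/4) * (4 * a0 + a2^2 + a1 * a3)"
    and b2_def: "b2 = - (a2 / 2)"
    and l0_def: "l0 = (4 * b2 + 2 * sqrt (3 * b1 + 4 * b2^2)) / 3"
    and D: "3 * b1 + 4 * b2^2 \<ge> 0"
  shows "l0 \<ge> a3^2/4 \<Longrightarrow> HH b0 b1 b2 l0 \<ge> 0 \<Longrightarrow> \<forall>x. -(x^4) + a3*x^3 + a2*x^2 + a1*x + a0 \<le> 0"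
    and "l0 > a3^2/4 \<Longrightarrow> HH b0 b1 b2 l0 > 0 \<Longrightarrow> \<forall>x. -(x^4) + a3*x^3 + a2*x^2 + a1*x + a0 < 0"
proof -
  define A where "A = a3^2/4 - l0"
  define B where "B = a1 + a3*a2/2 + a3*l0/2"
  define C where "C = a0 + (a2/2 + l0/2)^2"
  have key: "-(x^4) + a3*x^3 + a2*x^2 + a1*x + a0 = -((x^2 - a3/2*x - a2/2 - l0/2)^2) + (A*x^2 + B*x + C)" for x
    using key_id[of x a3 a2 a1 a0 l0] unfolding A_def B_def C_def .
  have disc: "4*A*C - B^2 = 4 * HH b0 b1 b2 l0"
    using disc_id[of a3 l0 a0 a2 a1] unfolding A_def B_def C_def HH_def b0_def b1_def b2_def
    by (simp add: mult.assoc)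
  have SD: "(sqrt (3 * b1 + 4 * b2^2))^2 = 3*b1 + 4*b2^2" using D by simp
  have hp: "-(3/4)*l0^2 + 2*b2*l0 + b1 = 0" using F2[OF SD, of l0] unfolding l0_def by simp
  have dr: "-(3/4)*l0^2 + 2*b2*l0 + b1 = -C - A*(-a2/2 - l0/2) - B*a3/4"
    using deriv_id[of l0 a2 a0 a1 a3] unfolding A_def B_def C_def b1_def b2_def by simp
  show "\<forall>x. -(x^4) + a3*x^3 + a2*x^2 + a1*x + a0 \<le> 0" if h1: "l0 \<ge> a3^2/4" and h2: "HH b0 b1 b2 l0 \<ge> 0"
  proof
    fix x
    have "A*x^2 + B*x + C \<le> 0"
    proof (cases "A < 0")
      case True then show ?thesis using R_nonpos[OF disc True h2] by simp
    next
      case False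
      then have A0: "A = 0" using h1 A_def by simp
      then have "4*A*C = 0" by simp
      then have "B^2 \<le> 0" using disc h2 by linarith
      then have B0: "B = 0" using zero_le_power2[of B] by (metis antisym power_eq_0_iff)
      have "C = 0" using hp dr A0 B0 by simp
      then show ?thesis using A0 B0 by simp
    qed
    moreover have "(x^2 - a3/2*x - a2/2 - l0/2)^2 \<ge> 0" by simp
    ultimately show "-(x^4) + a3*x^3 + a2*x^2 + a1*x + a0 \<le> 0" using key[of x] by linarith
  qed
  show "\<forall>x. -(x^4) + a3*x^3 + a2*x^2 + a1*x + a0 < 0" if h1: "l0 > a3^2/4" and h2: "HH b0 b1 b2 l0 > 0"
  proof
    fix x
    have "A < 0" using h1 A_def by simp
    then have "A*x^2 + B*x + C < 0" using R_neg[OF disc _ h2] by simp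
    then show "-(x^4) + a3*x^3 + a2*x^2 + a1*x + a0 < 0" using key[of x]
      by (smt (verit) zero_le_power2)
  qed
qed

lemma nec:
  fixes a0 a1 a2 a3 b0 b1 b2 l0 :: real
  assumes b0_def: "b0 = (1/4) * (- (a1^2) - a1 * a2 * a3 + a0 * a3^2)"
    and b1_def: "b1 = - (1/4) * (4 * a0 + a2^2 + a1 * a3)"
    and b2_def: "b2 = - (a2 / 2)"
    and l0_def: "l0 = (4 * b2 + 2 * sqrt (3 * b1 + 4 * b2^2)) / 3"
    and np: "\<forall>x. -(x^4) + a3*x^3 + a2*x^2 + a1*x + a0 \<le> 0"
  shows "3 * b1 + 4 * b2^2 \<ge> 0 \<and> l0 \<ge> a3^2/4 \<and> HH b0 b1 b2 l0 \<ge> 0"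
    and "(\<forall>x. -(x^4) + a3*x^3 + a2*x^2 + a1*x + a0 < 0) \<Longrightarrow>
         3 * b1 + 4 * b2^2 \<ge> 0 \<and> l0 > a3^2/4 \<and> HH b0 b1 b2 l0 > 0"
proof -
  define G where "G = (\<lambda>x::real. -(x^4) + a3*x^3 + a2*x^2 + a1*x + a0)"
  obtain x0 where mx: "\<forall>x. G x \<le> G x0" using quartic_max[of a3 a2 a1 a0] unfolding G_def by blast
  have g': "-4*x0^3 + 3*a3*x0^2 + 2*a2*x0 + a1 = 0" using quartic_max_deriv mx unfolding G_def by blast
  define M where "M = G x0"
  have M0: "M \<le> 0" using np unfolding M_def G_def by simp
  define c where "c = x0 - a3/2"
  define d where "d = 2*x0^2 - a3*x0 - a2 - a3^2/4"
  have fac: "G x - G x0 = -((x-x0)^2 * ((x + c)^2 + d))" for x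
    using factor_id[OF g', of x a0] unfolding G_def c_def d_def by simp
  have q: "(x + c)^2 + d \<ge> 0" if "x \<noteq> x0" for x
  proof -
    have "(x-x0)^2 > 0" using that by simp
    moreover have "(x-x0)^2 * ((x + c)^2 + d) \<ge> 0" using fac[of x] mx[rule_format, of x] by linarith
    ultimately show ?thesis by (simp add: zero_le_mult_iff)
  qed
  have d0: "d \<ge> 0"
  proof (rule ccontr)
    assume "\<not> d \<ge> 0"
    define t where "t = sqrt (-d/2)"
    have t0: "t > 0" and tt: "t^2 = -d/2" using \<open>\<not> d \<ge> 0\<close> by (auto simp: t_def)
    have "(-c + t + c)^2 + d < 0" "(-c - t + c)^2 + d < 0" using tt \<open>\<not> d \<ge> 0\<close> by auto
    moreover have "-c + t \<noteq> x0 \<or> -c - t \<noteq> x0" using t0 by auto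
    ultimately show False using q by force
  qed
  define ms where "ms = 2*x0^2 - a3*x0 - a2"
  define mA where "mA = a3^2/4"
  have Ams: "a3^2/4 - ms = -d" unfolding ms_def d_def by simp
  have Bms: "a1 + a3*a2/2 + a3*ms/2 = 2*d*x0" and Cms: "a0 + (a2/2 + ms/2)^2 = M - d*x0^2"
    using coeff_id[OF g', of M a0] unfolding ms_def d_def M_def G_def by (simp_all add: mult.assoc)
  have HHid: "4*(a3^2/4 - m)*(a0 + (a2/2 + m/2)^2) - (a1 + a3*a2/2 + a3*m/2)^2 = 4 * HH b0 b1 b2 m" for m
    using disc_id[of a3 m a0 a2 a1] unfolding HH_def b0_def b1_def b2_def by (simp add: mult.assoc)
  have Hms: "HH b0 b1 b2 ms = -d*M"
  proof -
    have "4 * HH b0 b1 b2 ms = 4*(-d)*(M - d*x0^2) - (2*d*x0)^2"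
      using HHid[of ms] Ams Bms Cms by simp
    also have "\<dots> = 4*(-d*M)" by (simp add: algebra_simps power2_eq_square)
    finally show ?thesis by simp
  qed
  have HmA: "HH b0 b1 b2 mA \<le> 0"
  proof -
    have "4 * HH b0 b1 b2 mA = - ((a1 + a3*a2/2 + a3*mA/2)^2)" using HHid[of mA] unfolding mA_def by simp
    then show ?thesis by (smt (verit) zero_le_power2)
  qed
  have drA: "-(3/4)*mA^2 + 2*b2*mA + b1 = -M" if "d = 0"
  proof -
    have "ms = mA" using Ams that unfolding mA_def by simp
    have "-(3/4)*ms^2 + 2*b2*ms + b1 = -(a0 + (a2/2 + ms/2)^2) - (a3^2/4 - ms)*(-a2/2 - ms/2) - (a1 + a3*a2/2 + a3*ms/2)*a3/4"
      using deriv_id[of ms a2 a0 a1 a3] unfolding b1_def b2_def by simp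
    then show ?thesis using Ams Bms Cms that \<open>ms = mA\<close> by simp
  qed
  have l0e: "l0 = (4*b2 + 2*sqrt (3*b1 + 4*b2^2))/3" using l0_def by simp
  show "3 * b1 + 4 * b2^2 \<ge> 0 \<and> l0 \<ge> a3^2/4 \<and> HH b0 b1 b2 l0 \<ge> 0"
  proof (cases "d = 0")
    case True
    have "-(3/4)*mA^2 + 2*b2*mA + b1 \<ge> 0" using drA[OF True] M0 by simp
    from cubic_nec2[OF this, of b0] have "3*b1 + 4*b2^2 \<ge> 0 \<and> mA \<le> l0 \<and> HH b0 b1 b2 l0 \<ge> HH b0 b1 b2 mA"
      unfolding l0e .
    moreover have "ms = mA" using Ams True unfolding mA_def by simp
    moreover have "HH b0 b1 b2 mA = 0" using Hms True calculation(2) by simp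
    ultimately show ?thesis unfolding mA_def by linarith
  next
    case False
    then have "mA < ms" using Ams d0 unfolding mA_def by simp
    moreover have "HH b0 b1 b2 ms \<ge> 0" using Hms d0 M0 by (simp add: mult_nonneg_nonpos)
    ultimately have "3*b1 + 4*b2^2 \<ge> 0 \<and> mA < l0 \<and> HH b0 b1 b2 l0 \<ge> HH b0 b1 b2 ms"
      using cubic_nec[of mA ms b0 b1 b2] HmA unfolding l0e by blast
    then show ?thesis using \<open>HH b0 b1 b2 ms \<ge> 0\<close> unfolding mA_def by simp
  qed
  show "3 * b1 + 4 * b2^2 \<ge> 0 \<and> l0 > a3^2/4 \<and> HH b0 b1 b2 l0 > 0"
    if neg: "\<forall>x. -(x^4) + a3*x^3 + a2*x^2 + a1*x + a0 < 0"
  proof -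
    have Mn: "M < 0" using neg unfolding M_def G_def by simp
    show ?thesis
    proof (cases "d = 0")
      case True
      have "-(3/4)*mA^2 + 2*b2*mA + b1 > 0" using drA[OF True] Mn by simp
      from cubic_nec2s[OF this, of b0] have "3*b1 + 4*b2^2 \<ge> 0 \<and> mA < l0 \<and> HH b0 b1 b2 l0 > HH b0 b1 b2 mA"
        unfolding l0e .
      moreover have "ms = mA" using Ams True unfolding mA_def by simp
      moreover have "HH b0 b1 b2 mA = 0" using Hms True calculation(2) by simp
      ultimately show ?thesis unfolding mA_def by linarith
    next
      case False
      then have dp: "d > 0" using d0 by simp
      then have "mA < ms" using Ams unfolding mA_def by simp
      moreover have "HH b0 b1 b2 ms > 0" using Hms dp Mn by (simp add: mult_pos_neg)
      ultimately have "3*b1 + 4*b2^2 \<ge> 0 \<and> mA < l0 \<and> HH b0 b1 b2 l0 \<ge> HH b0 b1 b2 ms"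
        using cubic_nec[of mA ms b0 b1 b2] HmA unfolding l0e by force
      then show ?thesis using \<open>HH b0 b1 b2 ms > 0\<close> unfolding mA_def by simp
    qed
  qed
qed


theorem corollary2:
  fixes a0 a1 a2 a3 b0 b1 b2 l0 :: real and f :: "real \<Rightarrow> real \<Rightarrow> real"
  assumes f_def: "f = (\<lambda>x y. - (x^4) + a3 * x^3 * y + a2 * x^2 * y^2 + a1 * x * y^3 + a0 * y^4)"
    and b0_def: "b0 = (1/4) * (- (a1^2) - a1 * a2 * a3 + a0 * a3^2)"
    and b1_def: "b1 = - (1/4) * (4 * a0 + a2^2 + a1 * a3)"
    and b2_def: "b2 = - (a2 / 2)"
    and l0_def: "l0 = (4 * b2 + 2 * sqrt (3 * b1 + 4 * b2^2)) / 3"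
  shows "(neg_semidefinite f \<longleftrightarrow>
            3 * b1 + 4 * b2^2 \<ge> 0 \<and> l0 \<ge> a3^2 / 4 \<and>
            - ((1/4) * l0^3) + b2 * l0^2 + b1 * l0 + b0 \<ge> 0)
       \<and> (neg_definite f \<longleftrightarrow>
            3 * b1 + 4 * b2^2 \<ge> 0 \<and> l0 > a3^2 / 4 \<and>
            - ((1/4) * l0^3) + b2 * l0^2 + b1 * l0 + b0 > 0)"
proof -
  define G where "G = (\<lambda>x::real. -(x^4) + a3*x^3 + a2*x^2 + a1*x + a0)"
  have hom: "f x y = y^4 * G (x/y)" if "y \<noteq> 0" for x y
  proof -
    define t where "t = x/y"
    have x: "x = t*y" using that unfolding t_def by simp
    show ?thesis unfolding x using that
      by (simp add: f_def G_def t_def[symmetric] field_simps power2_eq_square power3_eq_cube power4_eq_xxxx)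
  qed
  have f1: "f x 1 = G x" for x unfolding f_def G_def by simp
  have f0: "f x 0 < 0" if "x \<noteq> 0" for x using that unfolding f_def by simp
  have semi: "neg_semidefinite f \<longleftrightarrow> (\<forall>x. G x \<le> 0)"
  proof
    assume "neg_semidefinite f"
    then show "\<forall>x. G x \<le> 0" unfolding neg_semidefinite_def using f1 by (metis prod.inject zero_neq_one)
  next
    assume g: "\<forall>x. G x \<le> 0"
    show "neg_semidefinite f" unfolding neg_semidefinite_def
    proof (intro allI impI)
      fix x y :: real assume "(x, y) \<noteq> (0, 0)"
      show "f x y \<le> 0"
      proof (cases "y = 0")
        case True then show ?thesis using f0[of x] \<open>(x, y) \<noteq> (0, 0)\<close> by auto
      next
        case False then show ?thesis using hom[OF False, of x] g by (simp add: mult_nonneg_nonpos)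
      qed
    qed
  qed
  have defi: "neg_definite f \<longleftrightarrow> (\<forall>x. G x < 0)"
  proof
    assume "neg_definite f"
    then show "\<forall>x. G x < 0" unfolding neg_definite_def using f1 by (metis prod.inject zero_neq_one)
  next
    assume g: "\<forall>x. G x < 0"
    show "neg_definite f" unfolding neg_definite_def
    proof (intro allI impI)
      fix x y :: real assume "(x, y) \<noteq> (0, 0)"
      show "f x y < 0"
      proof (cases "y = 0")
        case True then show ?thesis using f0[of x] \<open>(x, y) \<noteq> (0, 0)\<close> by auto
      next
        case False then show ?thesis using hom[OF False, of x] g by (simp add: mult_pos_neg)
      qed
    qed
  qed
  have HHe: "- ((1/4) * l0^3) + b2 * l0^2 + b1 * l0 + b0 = HH b0 b1 b2 l0" unfolding HH_def by simp
  have P1: "(\<forall>x. G x \<le> 0) \<longleftrightarrow> 3 * b1 + 4 * b2^2 \<ge> 0 \<and> l0 \<ge> a3^2 / 4 \<and> HH b0 b1 b2 l0 \<ge> 0"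
    using nec(1)[OF b0_def b1_def b2_def l0_def] suff(1)[OF b0_def b1_def b2_def l0_def]
    unfolding G_def by blast
  have P2: "(\<forall>x. G x < 0) \<longleftrightarrow> 3 * b1 + 4 * b2^2 \<ge> 0 \<and> l0 > a3^2 / 4 \<and> HH b0 b1 b2 l0 > 0"
  proof
    assume g: "\<forall>x. G x < 0"
    then have "\<forall>x. G x \<le> 0" by (simp add: less_imp_le)
    then show "3 * b1 + 4 * b2^2 \<ge> 0 \<and> l0 > a3^2 / 4 \<and> HH b0 b1 b2 l0 > 0"
      using nec(2)[OF b0_def b1_def b2_def l0_def] g unfolding G_def by blast
  next
    assume "3 * b1 + 4 * b2^2 \<ge> 0 \<and> l0 > a3^2 / 4 \<and> HH b0 b1 b2 l0 > 0"
    then show "\<forall>x. G x < 0" using suff(2)[OF b0_def b1_def b2_def l0_def] unfolding G_def by blast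
  qed
  show ?thesis using semi defi P1 P2 HHe by simp
qed

end
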